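(* Let $n\ge k\ge1$, let $w,u:[n]^{(k)}\to\mathbb{R}$, and let $\tau^i=(x_iy_i)$, $i\in I$, be transpositions of $[n]$ such that the pairs $\{x_i,y_i\}$, $i\in I$, are pairwise disjoint. For $J\subseteq I$ let $\tau^J$ be the product of the $\tau^j$, $j\in J$; for $i\in I$ let $\delta(i)=\langle w,u\rangle-\langle w_{\tau^i},u\rangle$, and let $\delta(I)=\sum_{i\in I}\delta(i)$. Let $p\in[0,1]$ and let $J$ be a random subset of $I$ in which each $i\in I$ is included independently with probability $p$. Then $\mathbb{E}(\langle w,u\rangle-\langle w_{\tau^J},u\rangle)$ can be written as a polynomial in $p$ of the form $$\delta(I)p+\sum_{i=2}^kA_ip^i$$ for some real numbers $A_2,\dots,A_k$ (not depending on $p$).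
   Context: $[n]^{(k)}$ is the family of $k$-subsets of $[n]$; $\langle w,u\rangle=\sum_e w(e)u(e)$; $w_\pi(e)=w(\pi^{-1}(e))$ for a permutation $\pi$ of $[n]$. *)

theory Defs
  imports Complex_Main "HOL-Combinatorics.Transposition" "HOL-Library.FuncSet"
begin

definition ksubsets :: "nat \<Rightarrow> nat \<Rightarrow> nat set set" where
  "ksubsets n k = {e. e \<subseteq> {1..n} \<and> card e = k}"

definition inner_k :: "nat \<Rightarrow> nat \<Rightarrow> (nat set \<Rightarrow> real) \<Rightarrow> (nat set \<Rightarrow> real) \<Rightarrow> real" where
  "inner_k n k w u = (\<Sum>e\<in>ksubsets n k. w e * u e)"

definition perm_act :: "(nat \<Rightarrow> nat) \<Rightarrow> (nat set \<Rightarrow> real) \<Rightarrow> nat set \<Rightarrow> real" where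
  "perm_act \<pi> w e = w (inv \<pi> ` e)"

text \<open>The product of the transpositions (x j y j), j in J (they commute by disjointness).\<close>
definition tau_prod :: "('i \<Rightarrow> nat) \<Rightarrow> ('i \<Rightarrow> nat) \<Rightarrow> 'i set \<Rightarrow> nat \<Rightarrow> nat" where
  "tau_prod x y J = Finite_Set.fold (\<lambda>j f. transpose (x j) (y j) \<circ> f) id J"

definition exp_random_subset :: "'i set \<Rightarrow> real \<Rightarrow> ('i set \<Rightarrow> real) \<Rightarrow> real" where
  "exp_random_subset I p F = (\<Sum>J\<in>Pow I. p ^ card J * (1 - p) ^ card (I - J) * F J)"

end

theory Submission
  imports Defs
begin

definition mob :: "('i set \<Rightarrow> real) \<Rightarrow> 'i set \<Rightarrow> real" where
  "mob F K = (\<Sum>L\<in>Pow K. (-1) ^ card (K - L) * F L)"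

lemma sum_Pow_insert:
  assumes "finite K" "a \<notin> K"
  shows "(\<Sum>L\<in>Pow (insert a K). h L) = (\<Sum>L\<in>Pow K. h L) + (\<Sum>L\<in>Pow K. h (insert a L))"
proof -
  have inj: "inj_on (insert a) (Pow K)" using assms(2) by (auto simp: inj_on_def)
  have disj: "Pow K \<inter> insert a ` Pow K = {}" using assms(2) by auto
  have "(\<Sum>L\<in>Pow (insert a K). h L) = (\<Sum>L\<in>Pow K. h L) + (\<Sum>L\<in>insert a ` Pow K. h L)"
    unfolding Pow_insert using assms(1) by (intro sum.union_disjoint) (auto simp: disj)
  also have "(\<Sum>L\<in>insert a ` Pow K. h L) = (\<Sum>L\<in>Pow K. h (insert a L))"
    using sum.reindex[OF inj] by simp
  finally show ?thesis .
qed

lemma mob_insert: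
  assumes "finite K" "a \<notin> K"
  shows "mob F (insert a K) = mob (\<lambda>L. F (insert a L)) K - mob F K"
proof -
  have 1: "card (insert a K - L) = Suc (card (K - L))" if "L \<subseteq> K" for L
  proof -
    have "insert a K - L = insert a (K - L)" using that assms(2) by auto
    thus ?thesis using assms by simp
  qed
  have 2: "insert a K - insert a L = K - L" if "L \<subseteq> K" for L using that assms(2) by auto
  show ?thesis unfolding mob_def
    using assms by (simp add: sum_Pow_insert 1 2 sum_negf algebra_simps)
qed

lemma mob_zero:
  assumes "finite K" "a \<in> K" "\<And>L. L \<subseteq> K - {a} \<Longrightarrow> F (insert a L) = F L"
  shows "mob F K = 0"
proof -
  have K: "K = insert a (K - {a})" using assms(2) by auto
  have "mob F K = mob (\<lambda>L. F (insert a L)) (K - {a}) - mob F (K - {a})"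
    by (subst K, rule mob_insert) (use assms in auto)
  also have "mob (\<lambda>L. F (insert a L)) (K - {a}) = mob F (K - {a})"
    unfolding mob_def by (rule sum.cong) (auto simp: assms(3))
  finally show ?thesis by simp
qed

lemma ident:
  assumes "finite I"
  shows "exp_random_subset I p F = (\<Sum>K\<in>Pow I. p ^ card K * mob F K)"
  using assms
proof (induction I arbitrary: F rule: finite_induct)
  case empty
  then show ?case by (simp add: exp_random_subset_def mob_def)
next
  case (insert a I)
  have 1: "card (insert a I - J) = Suc (card (I - J))" if "J \<subseteq> I" for J
  proof -
    have "insert a I - J = insert a (I - J)" using that insert by auto
    thus ?thesis using insert by simp
  qed
  have 2: "insert a I - insert a J = I - J" if "J \<subseteq> I" for J using that insert by auto
  have 3: "card (insert a J) = Suc (card J)" if "J \<subseteq> I" for J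
    using that insert finite_subset by (metis card_insert_disjoint subsetD)
  have L: "exp_random_subset (insert a I) p F
      = (1 - p) * exp_random_subset I p F + p * exp_random_subset I p (\<lambda>L. F (insert a L))"
  proof -
    have "exp_random_subset (insert a I) p F =
       (\<Sum>J\<in>Pow I. p ^ card J * (1 - p) ^ card (insert a I - J) * F J)
     + (\<Sum>J\<in>Pow I. p ^ card (insert a J) * (1 - p) ^ card (insert a I - insert a J) * F (insert a J))"
      unfolding exp_random_subset_def using insert by (simp add: sum_Pow_insert)
    also have "(\<Sum>J\<in>Pow I. p ^ card J * (1 - p) ^ card (insert a I - J) * F J)
       = (1 - p) * exp_random_subset I p F"
      unfolding exp_random_subset_def sum_distrib_left
      by (rule sum.cong) (auto simp: 1)
    also have "(\<Sum>J\<in>Pow I. p ^ card (insert a J) * (1 - p) ^ card (insert a I - insert a J) * F (insert a J))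
       = p * exp_random_subset I p (\<lambda>L. F (insert a L))"
      unfolding exp_random_subset_def sum_distrib_left
      by (rule sum.cong, simp, subst 2, simp, subst 3, simp, simp)
    finally show ?thesis .
  qed
  have R: "(\<Sum>K\<in>Pow (insert a I). p ^ card K * mob F K)
     = (1 - p) * (\<Sum>K\<in>Pow I. p ^ card K * mob F K) + p * (\<Sum>K\<in>Pow I. p ^ card K * mob (\<lambda>L. F (insert a L)) K)"
  proof -
    have m: "mob F (insert a K) = mob (\<lambda>L. F (insert a L)) K - mob F K" if "K \<subseteq> I" for K
      using mob_insert[of K a F] that insert finite_subset by blast
    have "(\<Sum>K\<in>Pow (insert a I). p ^ card K * mob F K)
      = (\<Sum>K\<in>Pow I. p ^ card K * mob F K) + (\<Sum>K\<in>Pow I. p ^ card (insert a K) * mob F (insert a K))"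
      using insert by (simp add: sum_Pow_insert)
    also have "(\<Sum>K\<in>Pow I. p ^ card (insert a K) * mob F (insert a K))
      = p * (\<Sum>K\<in>Pow I. p ^ card K * mob (\<lambda>L. F (insert a L)) K) - p * (\<Sum>K\<in>Pow I. p ^ card K * mob F K)"
      unfolding sum_distrib_left sum_subtractf[symmetric]
      by (rule sum.cong) (auto simp: 3 m algebra_simps)
    finally show ?thesis by (simp add: algebra_simps)
  qed
  show ?case using L R insert.IH by simp
qed


lemma transpose_disj_commute:
  assumes "{a, b} \<inter> {c, d} = {}"
  shows "Transposition.transpose a b \<circ> Transposition.transpose c d = Transposition.transpose c d \<circ> Transposition.transpose a b"
  using assms by (auto simp: fun_eq_iff transpose_def)

locale tsetup =
  fixes I :: "'i set" and x y :: "'i \<Rightarrow> nat"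
  assumes disj: "\<And>i j. i \<in> I \<Longrightarrow> j \<in> I \<Longrightarrow> i \<noteq> j \<Longrightarrow> {x i, y i} \<inter> {x j, y j} = {}"
begin

lemma cfc: "comp_fun_commute_on I (\<lambda>j f. Transposition.transpose (x j) (y j) \<circ> f)"
proof
  fix i j assume "i \<in> I" "j \<in> I"
  show "(\<lambda>f. Transposition.transpose (x j) (y j) \<circ> f) \<circ> (\<lambda>f. Transposition.transpose (x i) (y i) \<circ> f) =
        (\<lambda>f. Transposition.transpose (x i) (y i) \<circ> f) \<circ> (\<lambda>f. Transposition.transpose (x j) (y j) \<circ> f)"
  proof (cases "i = j")
    case False
    then have "{x j, y j} \<inter> {x i, y i} = {}" using disj \<open>i \<in> I\<close> \<open>j \<in> I\<close> by blast
    from transpose_disj_commute[OF this] show ?thesis by (simp add: fun_eq_iff comp_assoc[symmetric])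
  qed simp
qed

lemma tau_insert:
  assumes "finite J" "J \<subseteq> I" "a \<in> I" "a \<notin> J"
  shows "tau_prod x y (insert a J) = Transposition.transpose (x a) (y a) \<circ> tau_prod x y J"
  unfolding tau_prod_def using comp_fun_commute_on.fold_insert[OF cfc] assms by auto

lemma tau_empty: "tau_prod x y {} = id"
  unfolding tau_prod_def by simp

lemma tau_bij:
  assumes "finite J" "J \<subseteq> I"
  shows "bij (tau_prod x y J)"
  using assms
proof (induction J rule: finite_induct)
  case empty then show ?case by (simp add: tau_empty bij_betw_def)
next
  case (insert a J)
  then have e: "tau_prod x y (insert a J) = Transposition.transpose (x a) (y a) \<circ> tau_prod x y J"
    using tau_insert[of J a] by auto
  have "bij (tau_prod x y J)" using insert by auto
  then show ?case unfolding e by (rule bij_comp[OF _ bij_transpose])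
qed

lemma tau_inv_image:
  assumes "finite L" "L \<subseteq> I" "a \<in> I" "a \<notin> L" "x a \<notin> e" "y a \<notin> e"
  shows "inv (tau_prod x y (insert a L)) ` e = inv (tau_prod x y L) ` e"
proof -
  have "inv (tau_prod x y (insert a L)) = inv (tau_prod x y L) \<circ> Transposition.transpose (x a) (y a)"
    using assms by (simp add: tau_insert o_inv_distrib tau_bij)
  moreover have "Transposition.transpose (x a) (y a) ` e = e"
    using assms(5,6) by (auto simp: transpose_def image_iff)
  ultimately show ?thesis by (metis image_comp)
qed

end


theorem lemma4p4:
  fixes n k :: nat and w u :: "nat set \<Rightarrow> real"
    and I :: "'i set" and x y :: "'i \<Rightarrow> nat"
  assumes "1 \<le> k" and "k \<le> n"
    and "\<And>i. i \<in> I \<Longrightarrow> x i \<in> {1..n} \<and> y i \<in> {1..n} \<and> x i \<noteq> y i"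
    and "\<And>i j. i \<in> I \<Longrightarrow> j \<in> I \<Longrightarrow> i \<noteq> j \<Longrightarrow> {x i, y i} \<inter> {x j, y j} = {}"
  shows "\<exists>A :: nat \<Rightarrow> real. \<forall>p \<in> {0..1::real}.
    exp_random_subset I p
      (\<lambda>J. inner_k n k w u - inner_k n k (perm_act (tau_prod x y J) w) u)
    = (\<Sum>i\<in>I. inner_k n k w u - inner_k n k (perm_act (transpose (x i) (y i)) w) u) * p
      + (\<Sum>i=2..k. A i * p ^ i)"
proof -
  interpret tsetup I x y using assms(4) by unfold_locales
  show ?thesis
  proof (cases "finite I")
    case False
    then show ?thesis by (intro exI[of _ "\<lambda>_. 0"]) (simp add: exp_random_subset_def)
  next
    case True
    define c where "c = inner_k n k w u"
    define E where "E = ksubsets n k"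
    define F where "F = (\<lambda>J. inner_k n k w u - inner_k n k (perm_act (tau_prod x y J) w) u)"
    have finE: "finite E" unfolding E_def ksubsets_def
      by (rule finite_subset[of _ "Pow {1..n}"]) auto
    have Fform: "F J = c - (\<Sum>e\<in>E. w (inv (tau_prod x y J) ` e) * u e)" for J
      by (simp add: F_def c_def E_def inner_k_def perm_act_def)
    have mobF: "mob F K = c * mob (\<lambda>_. 1) K - (\<Sum>e\<in>E. u e * mob (\<lambda>L. w (inv (tau_prod x y L) ` e)) K)" for K
    proof -
      have "mob F K = (\<Sum>L\<in>Pow K. (-1) ^ card (K - L) * c)
          - (\<Sum>L\<in>Pow K. \<Sum>e\<in>E. (-1) ^ card (K - L) * (w (inv (tau_prod x y L) ` e) * u e))"
        unfolding mob_def Fform by (simp add: right_diff_distrib sum_subtractf sum_distrib_left)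
      also have "(\<Sum>L\<in>Pow K. \<Sum>e\<in>E. (-1) ^ card (K - L) * (w (inv (tau_prod x y L) ` e) * u e))
          = (\<Sum>e\<in>E. \<Sum>L\<in>Pow K. (-1) ^ card (K - L) * (w (inv (tau_prod x y L) ` e) * u e))"
        by (rule sum.swap)
      finally show ?thesis unfolding mob_def by (simp add: sum_distrib_left sum_distrib_right mult_ac)
    qed
    have mob0: "mob F K = 0" if K: "K \<subseteq> I" "k < card K" for K
    proof -
      have finK: "finite K" using True K finite_subset by blast
      obtain a0 where a0: "a0 \<in> K" using K by fastforce
      have m1: "mob (\<lambda>_. 1) K = 0" by (rule mob_zero[OF finK a0]) simp
      have m2: "mob (\<lambda>L. w (inv (tau_prod x y L) ` e)) K = 0" if e: "e \<in> E" for e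
      proof -
        have fine: "finite e" and ce: "card e = k" using e assms(1) unfolding E_def ksubsets_def
          by (auto intro: card_ge_0_finite)
        have "\<exists>a\<in>K. x a \<notin> e \<and> y a \<notin> e"
        proof (rule ccontr)
          assume "\<not> ?thesis"
          then have h: "\<forall>a\<in>K. x a \<in> e \<or> y a \<in> e" by blast
          define f where "f i = (if x i \<in> e then x i else y i)" for i
          have "inj_on f K"
          proof (rule inj_onI)
            fix i j assume ij: "i \<in> K" "j \<in> K" "f i = f j"
            show "i = j"
            proof (rule ccontr)
              assume "i \<noteq> j"
              then have "{x i, y i} \<inter> {x j, y j} = {}" using assms(4) ij K by blast
              moreover have "f i \<in> {x i, y i}" "f j \<in> {x j, y j}" by (auto simp: f_def)
              ultimately show False using ij by auto
            qed
          qed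
          moreover have "f ` K \<subseteq> e" using h by (auto simp: f_def)
          ultimately have "card K \<le> card e" using card_inj_on_le fine by blast
          then show False using K ce by simp
        qed
        then obtain a where a: "a \<in> K" "x a \<notin> e" "y a \<notin> e" by blast
        show ?thesis
        proof (rule mob_zero[OF finK a(1)])
          fix L assume L: "L \<subseteq> K - {a}"
          have "finite L" using L finK finite_subset by blast
          then show "w (inv (tau_prod x y (insert a L)) ` e) = w (inv (tau_prod x y L) ` e)"
          proof -
            have "L \<subseteq> I" "a \<in> I" "a \<notin> L" using L a K by auto
            then show ?thesis using tau_inv_image[of L a e] a \<open>finite L\<close> by simp
          qed
        qed
      qed
      show ?thesis using mobF[of K] m1 m2 by simp
    qed
    have pid: "perm_act id w = w" by (simp add: perm_act_def fun_eq_iff inv_id)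
    have F0: "F {} = 0" by (simp add: F_def tau_empty pid)
    have mobe: "mob F {} = 0" by (simp add: mob_def F0)
    have mob1: "mob F {i} = F {i}" for i
    proof -
      have "Pow {i} = {{}, {i}}" by auto
      then show ?thesis by (simp add: mob_def F0)
    qed
    have Fi: "F {i} = inner_k n k w u - inner_k n k (perm_act (transpose (x i) (y i)) w) u" if "i \<in> I" for i
      using tau_insert[of "{}" i] tau_empty that by (simp add: F_def)
    define A where "A m = (\<Sum>K\<in>Pow I. if m = card K then mob F K else 0)" for m
    have A1: "A 1 = (\<Sum>i\<in>I. F {i})"
    proof -
      have "A 1 = (\<Sum>K\<in>{K\<in>Pow I. card K = 1}. mob F K)"
        unfolding A_def by (subst sum.inter_filter) (use True in \<open>auto intro!: sum.cong\<close>)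
      also have "{K\<in>Pow I. card K = 1} = (\<lambda>i. {i}) ` I" by (auto simp: card_1_singleton_iff)
      also have "(\<Sum>K\<in>(\<lambda>i. {i}) ` I. mob F K) = (\<Sum>i\<in>I. mob F {i})"
        by (rule sum.reindex_cong[where l="\<lambda>i. {i}"]) (auto simp: inj_on_def)
      finally show ?thesis by (simp add: mob1)
    qed
    have main: "exp_random_subset I p F = (\<Sum>i\<in>I. F {i}) * p + (\<Sum>i=2..k. A i * p ^ i)" for p
    proof -
      have "exp_random_subset I p F = (\<Sum>K\<in>Pow I. p ^ card K * mob F K)" by (rule ident[OF True])
      also have "\<dots> = (\<Sum>K\<in>Pow I. \<Sum>m\<in>{1..k}. if m = card K then p ^ m * mob F K else 0)"
      proof (rule sum.cong)
        fix K assume K: "K \<in> Pow I"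
        have "finite K" using K True finite_subset by blast
        show "p ^ card K * mob F K = (\<Sum>m\<in>{1..k}. if m = card K then p ^ m * mob F K else 0)"
        proof (subst sum.delta)
          show "p ^ card K * mob F K = (if card K \<in> {1..k} then p ^ card K * mob F K else 0)"
          proof (cases "card K \<in> {1..k}")
            case False
            then have "card K = 0 \<or> k < card K" by auto
            then show ?thesis using mob0[of K] K mobe \<open>finite K\<close> False by auto
          qed simp
        qed simp
      qed simp
      also have "\<dots> = (\<Sum>m\<in>{1..k}. \<Sum>K\<in>Pow I. if m = card K then p ^ m * mob F K else 0)"
        by (rule sum.swap)
      also have "\<dots> = (\<Sum>m\<in>{1..k}. A m * p ^ m)"
        unfolding A_def sum_distrib_right by (intro sum.cong) auto
      also have "{1..k} = insert 1 {2..k}" using assms(1) by auto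
      also have "(\<Sum>m\<in>insert 1 {2..k}. A m * p ^ m) = A 1 * p + (\<Sum>m=2..k. A m * p ^ m)"
        by simp
      finally show ?thesis by (simp only: A1)
    qed
    show ?thesis
      by (intro exI[of _ A] ballI) (simp add: main[unfolded F_def] Fi[unfolded F_def] cong: sum.cong)
  qed
qed

end
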